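(* Let $k,N\ge0$ and $g\in\mathcal M(k)$. The quadratic form $h\mapsto Q_{A,2}(gh)$ on $V_N$ has polar rank at least $\max\{0,N-k-m+1\}$. Consequently, with $n=k+N$ and any non-trivial additive character $\psi$, \[ \Bigl|\sum_{h\in\mathcal M(N)}\psi(Q_A(gh))\Bigr|\ll_A q^{N-\max(0,N-k-m)/2}, \] with implied constant depending only on $q$ and $A$, uniformly in $\ell_n$ and $\psi$.
   Context: $q$ is an odd prime power; fix $m\ge0$, $c_0,\dots,c_m\in\mathbb F_q$ with $c_m\ne0$, $A(z)=c_0+\tfrac12\sum_{\ell=1}^m c_\ell(z^\ell+z^{-\ell})$. $Q_{A,2}(f)=\operatorname{CT}\,A(z)f(z)f(z^{-1})=\sum_{j=0}^m c_j\sum_{i\ge j}f_if_{i-j}$. For each $n$, $\ell_n$ is an arbitrary linear form in the coefficients $f_0,\dots,f_n$, and for $f$ of degree $n$, $Q_A(f)=Q_{A,2}(f)+\ell_n(f)$. $\mathcal M(k)$ is the set of monic polynomials of degree $k$, $V_N$ the space of polynomials of degree $\le N$. Polar rank is the rank of $(x,y)\mapsto Q(x+y)-Q(x)-Q(y)$. *)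

theory Defs
  imports "HOL-Computational_Algebra.Polynomial" "HOL-Library.Cardinality" Complex_Main
begin

text \<open>The coefficient sequence c_0..c_m of A is given by a function c :: nat => 'a.
  Q_{A,2}(f) = sum_{j=0}^m c_j sum_{i >= j} f_i f_{i-j}.\<close>
definition QA2 :: "(nat \<Rightarrow> 'a::field) \<Rightarrow> nat \<Rightarrow> 'a poly \<Rightarrow> 'a" where
  "QA2 c m f = (\<Sum>j\<le>m. c j * (\<Sum>i\<in>{j..degree f}. coeff f i * coeff f (i - j)))"

definition linform :: "(nat \<Rightarrow> 'a::field) \<Rightarrow> nat \<Rightarrow> 'a poly \<Rightarrow> 'a" where
  "linform L n f = (\<Sum>i\<le>n. L i * coeff f i)"

definition QA :: "(nat \<Rightarrow> 'a::field) \<Rightarrow> nat \<Rightarrow> (nat \<Rightarrow> 'a) \<Rightarrow> nat \<Rightarrow> 'a poly \<Rightarrow> 'a" where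
  "QA c m L n f = QA2 c m f + linform L n f"

definition monics :: "nat \<Rightarrow> 'a::field poly set" where
  "monics k = {p. degree p = k \<and> lead_coeff p = 1}"

definition Vsp :: "nat \<Rightarrow> 'a::field poly set" where
  "Vsp N = {p. degree p \<le> N}"

definition polar :: "('v::ab_group_add \<Rightarrow> 'a::ab_group_add) \<Rightarrow> 'v \<Rightarrow> 'v \<Rightarrow> 'a" where
  "polar Q x y = Q (x + y) - Q x - Q y"

definition polar_rank :: "('a::field poly \<Rightarrow> 'a) \<Rightarrow> 'a poly set \<Rightarrow> nat" where
  "polar_rank Q V = vector_space.dim smult V
     - vector_space.dim smult {x \<in> V. \<forall>y\<in>V. polar Q x y = 0}"

definition nontriv_add_char :: "('a::field \<Rightarrow> complex) \<Rightarrow> bool" where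
  "nontriv_add_char \<psi> \<longleftrightarrow> (\<forall>x y. \<psi> (x + y) = \<psi> x * \<psi> y) \<and> (\<exists>x. \<psi> x \<noteq> 1)"

end

theory Submission
  imports Defs
begin

definition Bf :: "(nat \<Rightarrow> 'a::field) \<Rightarrow> nat \<Rightarrow> nat \<Rightarrow> 'a poly \<Rightarrow> 'a poly \<Rightarrow> 'a" where
  "Bf c m D f h = (\<Sum>j\<le>m. c j * (\<Sum>i\<in>{j..D}. coeff f i * coeff h (i - j)))"

lemma QA2_Bf:
  assumes "degree f \<le> D"
  shows "QA2 c m f = Bf c m D f f"
  unfolding QA2_def Bf_def
proof (rule sum.cong[OF refl])
  fix j assume "j \<in> {..m}"
  have "(\<Sum>i = j..degree f. coeff f i * coeff f (i - j)) = (\<Sum>i = j..D. coeff f i * coeff f (i - j))"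
    by (rule sum.mono_neutral_left) (use assms in \<open>auto simp: coeff_eq_0\<close>)
  then show "c j * (\<Sum>i = j..degree f. coeff f i * coeff f (i - j)) = c j * (\<Sum>i = j..D. coeff f i * coeff f (i - j))"
    by simp
qed

lemma Bf_add1: "Bf c m D (a + b) h = Bf c m D a h + Bf c m D b h"
  by (simp add: Bf_def algebra_simps sum.distrib)
lemma Bf_add2: "Bf c m D f (a + b) = Bf c m D f a + Bf c m D f b"
  by (simp add: Bf_def algebra_simps sum.distrib)
lemma Bf_smult1: "Bf c m D (smult u a) h = u * Bf c m D a h"
  by (simp add: Bf_def algebra_simps sum_distrib_left)

lemma deg_gx:
  assumes "g \<in> monics k" "x \<in> Vsp n"
  shows "degree (g * x) \<le> k + n"
  using assms degree_mult_le[of g x] unfolding monics_def Vsp_def by auto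

lemma polar_eq:
  fixes g :: "'a::field poly"
  assumes "degree (g * x) \<le> D" "degree (g * y) \<le> D"
  shows "polar (\<lambda>h. QA2 c m (g * h)) x y = Bf c m D (g*x) (g*y) + Bf c m D (g*y) (g*x)"
proof -
  have "degree (g * (x + y)) \<le> D"
    using assms degree_add_le[of "g*x" D "g*y"] by (simp add: distrib_left)
  then show ?thesis
    using assms unfolding polar_def
    by (simp add: QA2_Bf[where D=D] distrib_left Bf_add1 Bf_add2)
qed

lemma polar_sym: "polar Q x y = polar Q y x"
  unfolding polar_def by (simp add: add.commute)

lemma polar_add:
  fixes g :: "'a::field poly"
  assumes "g \<in> monics k" "x1 \<in> Vsp n" "x2 \<in> Vsp n" "y \<in> Vsp n"
  shows "polar (\<lambda>h. QA2 c m (g * h)) (x1 + x2) y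
     = polar (\<lambda>h. QA2 c m (g * h)) x1 y + polar (\<lambda>h. QA2 c m (g * h)) x2 y"
proof -
  have "x1 + x2 \<in> Vsp n" using assms degree_add_le[of x1 n x2] unfolding Vsp_def by auto
  have e1: "polar (\<lambda>h. QA2 c m (g * h)) (x1 + x2) y = Bf c m (k+n) (g*(x1+x2)) (g*y) + Bf c m (k+n) (g*y) (g*(x1+x2))"
    by (rule polar_eq) (use deg_gx[OF assms(1)] assms \<open>x1 + x2 \<in> Vsp n\<close> in auto)
  have e2: "polar (\<lambda>h. QA2 c m (g * h)) x1 y = Bf c m (k+n) (g*x1) (g*y) + Bf c m (k+n) (g*y) (g*x1)"
    by (rule polar_eq) (use deg_gx[OF assms(1)] assms in auto)
  have e3: "polar (\<lambda>h. QA2 c m (g * h)) x2 y = Bf c m (k+n) (g*x2) (g*y) + Bf c m (k+n) (g*y) (g*x2)"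
    by (rule polar_eq) (use deg_gx[OF assms(1)] assms in auto)
  show ?thesis unfolding e1 e2 e3 by (simp add: distrib_left Bf_add1 Bf_add2)
qed

lemma polar_smult:
  fixes g :: "'a::field poly"
  assumes "g \<in> monics k" "x \<in> Vsp n" "y \<in> Vsp n"
  shows "polar (\<lambda>h. QA2 c m (g * h)) (smult u x) y = u * polar (\<lambda>h. QA2 c m (g * h)) x y"
proof -
  have "smult u x \<in> Vsp n" using assms degree_smult_le[of u x] unfolding Vsp_def by auto
  have e1: "polar (\<lambda>h. QA2 c m (g * h)) (smult u x) y = Bf c m (k+n) (g*(smult u x)) (g*y) + Bf c m (k+n) (g*y) (g*(smult u x))"
    by (rule polar_eq) (use deg_gx[OF assms(1)] assms \<open>smult u x \<in> Vsp n\<close> in auto)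
  have e2: "polar (\<lambda>h. QA2 c m (g * h)) x y = Bf c m (k+n) (g*x) (g*y) + Bf c m (k+n) (g*y) (g*x)"
    by (rule polar_eq) (use deg_gx[OF assms(1)] assms in auto)
  show ?thesis unfolding e1 e2 by (simp add: Bf_smult1 Bf_def sum_distrib_left algebra_simps)
qed


lemma key:
  fixes g x :: "'a::field poly"
  assumes g: "g \<in> monics k" and x0: "x \<noteq> 0" and dx: "degree x + k + m \<le> n"
    and cm: "c m \<noteq> 0" and two: "(2::'a) \<noteq> 0"
  shows "\<exists>y\<in>Vsp n. polar (\<lambda>h. QA2 c m (g*h)) x y \<noteq> 0"
proof -
  define t where "t = degree x"
  have dg: "degree g = k" and g1: "coeff g k = 1" using g unfolding monics_def by auto
  define s where "s = (LEAST i. coeff g i \<noteq> 0)"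
  have gs: "coeff g s \<noteq> 0" unfolding s_def by (rule LeastI[of _ k]) (simp add: g1)
  have sk: "s \<le> k" unfolding s_def by (rule Least_le) (simp add: g1)
  have glow: "\<And>i. i < s \<Longrightarrow> coeff g i = 0" unfolding s_def using not_less_Least by blast
  define b where "b = t + k - s + m"
  have bs: "b + s = t + k + m" using sk unfolding b_def by simp
  have bn: "b \<le> n" using dx sk unfolding b_def t_def by simp
  define y where "y = (monom 1 b :: 'a poly)"
  have yV: "y \<in> Vsp n" unfolding y_def Vsp_def using bn degree_monom_le[of "1::'a" b] by auto
  have cy: "\<And>l. coeff (g*y) l = (if l < b then 0 else coeff g (l - b))"
    unfolding y_def by (simp add: mult.commute[of g] coeff_monom_mult)
  have xt: "coeff x t \<noteq> 0" using x0 unfolding t_def by simp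
  have cxt: "coeff (g*x) (k+t) = coeff x t"
    using coeff_mult_degree_sum[of g x] dg g1 unfolding t_def by simp
  have dgx: "degree (g*x) \<le> k + t" using degree_mult_le[of g x] dg unfolding t_def by simp
  have cxh: "\<And>i. i > k+t \<Longrightarrow> coeff (g*x) i = 0" using dgx by (simp add: coeff_eq_0)
  define D where "D = k + n"
  define V where "V = coeff x t * coeff g s"
  have tD: "k + t \<le> D" using dx unfolding D_def t_def by simp
  have bsD: "b + s \<le> D" using dx bs unfolding D_def t_def by simp
  have inner1: "(\<Sum>i\<in>{j..D}. coeff (g*x) i * coeff (g*y) (i-j)) = (if j = 0 \<and> m = 0 then V else 0)"
    if "j \<le> m" for j
  proof -
    have pt: "coeff (g*x) i * coeff (g*y) (i-j) = (if j = 0 \<and> m = 0 then (if i = k+t then V else 0) else 0)"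
      if "i \<in> {j..D}" for i
    proof (cases "k + t < i")
      case True then show ?thesis using cxh by auto
    next
      case False
      show ?thesis
      proof (cases "j = 0 \<and> m = 0 \<and> i = k+t")
        case True
        then have "b = t + k - s" unfolding b_def by simp
        then show ?thesis using True sk cxt cy unfolding V_def by (auto simp: algebra_simps)
      next
        case c2: False
        have "coeff (g*y) (i-j) = 0"
        proof (cases "i - j < b")
          case True then show ?thesis using cy by simp
        next
          case f2: False
          have "i - j - b < s" using False c2 bs f2 that by auto
          then show ?thesis using cy glow f2 by simp
        qed
        then show ?thesis using c2 by auto
      qed
    qed
    have "(\<Sum>i\<in>{j..D}. coeff (g*x) i * coeff (g*y) (i-j))
        = (\<Sum>i\<in>{j..D}. (if j = 0 \<and> m = 0 then (if i = k+t then V else 0) else 0))"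
      by (rule sum.cong) (auto simp: pt)
    also have "\<dots> = (if j = 0 \<and> m = 0 then V else 0)"
      using tD by (auto simp: sum.delta')
    finally show ?thesis .
  qed
  have inner2: "(\<Sum>i\<in>{j..D}. coeff (g*y) i * coeff (g*x) (i-j)) = (if j = m then V else 0)"
    if "j \<le> m" for j
  proof -
    have pt: "coeff (g*y) i * coeff (g*x) (i-j) = (if j = m then (if i = b + s then V else 0) else 0)"
      if "i \<in> {j..D}" for i
    proof (cases "i < b + s")
      case True
      have "coeff (g*y) i = 0"
      proof (cases "i < b")
        case True then show ?thesis using cy by simp
      next
        case False then show ?thesis using cy glow \<open>i < b + s\<close> by simp
      qed
      then show ?thesis using True by auto
    next
      case False
      show ?thesis
      proof (cases "k + t < i - j")
        case True then show ?thesis using cxh False bs \<open>j \<le> m\<close> by auto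
      next
        case f2: False
        have "j = m" "i = b + s" using False f2 bs that \<open>j \<le> m\<close> by auto
        then have "i - b = s" "\<not> i < b" "i - j = k + t" using bs by auto
        then show ?thesis using cy cxt \<open>j = m\<close> \<open>i = b + s\<close> unfolding V_def by (simp add: algebra_simps)
      qed
    qed
    have "(\<Sum>i\<in>{j..D}. coeff (g*y) i * coeff (g*x) (i-j))
        = (\<Sum>i\<in>{j..D}. (if j = m then (if i = b + s then V else 0) else 0))"
      by (rule sum.cong) (auto simp: pt)
    also have "\<dots> = (if j = m then V else 0)"
      using bsD bs by (auto simp: sum.delta')
    finally show ?thesis .
  qed
  have T1: "Bf c m D (g*x) (g*y) = (if m = 0 then c 0 * V else 0)"
  proof -
    have "Bf c m D (g*x) (g*y) = (\<Sum>j\<le>m. c j * (if j = 0 \<and> m = 0 then V else 0))"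
      unfolding Bf_def by (rule sum.cong) (auto simp: inner1)
    also have "\<dots> = (if m = 0 then c 0 * V else 0)" by (cases "m = 0") auto
    finally show ?thesis .
  qed
  have T2: "Bf c m D (g*y) (g*x) = c m * V"
  proof -
    have "Bf c m D (g*y) (g*x) = (\<Sum>j\<le>m. c j * (if j = m then V else 0))"
      unfolding Bf_def by (rule sum.cong) (auto simp: inner2)
    also have "\<dots> = c m * V" by (simp add: if_distrib sum.delta' cong: if_cong)
    finally show ?thesis .
  qed
  have dgy: "degree (g*y) \<le> D" using deg_gx[OF g yV] unfolding D_def .
  have P: "polar (\<lambda>h. QA2 c m (g*h)) x y = Bf c m D (g*x) (g*y) + Bf c m D (g*y) (g*x)"
    by (rule polar_eq) (use dgx tD dgy in auto)
  have V0: "V \<noteq> 0" unfolding V_def using xt gs by simp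
  have "polar (\<lambda>h. QA2 c m (g*h)) x y \<noteq> 0"
  proof (cases "m = 0")
    case True
    then have "polar (\<lambda>h. QA2 c m (g*h)) x y = 2 * c 0 * V" unfolding P T1 T2 by simp
    then show ?thesis using True cm two V0 by simp
  next
    case False then show ?thesis unfolding P T1 T2 using cm V0 by simp
  qed
  then show ?thesis using yV by blast
qed


lemma even_card_invol:
  assumes "finite A" "\<forall>x\<in>A. f x \<in> A \<and> f x \<noteq> x \<and> f (f x) = x"
  shows "even (card A)"
  using assms
proof (induction "card A" arbitrary: A rule: less_induct)
  case less
  show ?case
  proof (cases "A = {}")
    case True then show ?thesis by simp
  next
    case False
    then obtain x where x: "x \<in> A" by blast
    let ?B = "A - {x, f x}"
    have sub: "{x, f x} \<subseteq> A" using x less.prems by auto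
    have c2: "card {x, f x} = 2" using x less.prems by auto
    have cA: "card A = card ?B + 2"
      using card_Diff_subset[of "{x, f x}" A] sub c2 less.prems(1) card_mono[OF less.prems(1) sub] by auto
    have "even (card ?B)"
    proof (rule less.hyps)
      show "card ?B < card A" using cA by simp
      show "finite ?B" using less.prems by simp
      show "\<forall>y\<in>?B. f y \<in> ?B \<and> f y \<noteq> y \<and> f (f y) = y"
      proof
        fix y assume y: "y \<in> ?B"
        then have yA: "y \<in> A" "y \<noteq> x" "y \<noteq> f x" by auto
        have "f y \<noteq> x" using yA less.prems x by metis
        moreover have "f y \<noteq> f x" using yA less.prems x by metis
        ultimately show "f y \<in> ?B \<and> f y \<noteq> y \<and> f (f y) = y" using yA less.prems by auto
      qed
    qed
    then show ?thesis using cA by simp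
  qed
qed

lemma two_ne_0:
  assumes "odd CARD('a::{finite,field})"
  shows "(2::'a) \<noteq> 0"
proof
  assume h: "(2::'a) = 0"
  have "even (card (UNIV::'a set))"
  proof (rule even_card_invol[where f="\<lambda>x. x + 1"])
    show "finite (UNIV::'a set)" by simp
    show "\<forall>x\<in>UNIV. x + 1 \<in> (UNIV::'a set) \<and> x + 1 \<noteq> x \<and> x + 1 + 1 = x"
      using h by (simp add: add.assoc one_add_one)
  qed
  then show False using assms by simp
qed

lemma card_le_lists:
  fixes f :: "'b \<Rightarrow> 'a::finite list"
  assumes "inj_on f A" "\<And>x. x \<in> A \<Longrightarrow> length (f x) = n"
  shows "card A \<le> CARD('a) ^ n" "finite A"
proof -
  have sub: "f ` A \<subseteq> {xs. set xs \<subseteq> UNIV \<and> length xs = n}" using assms(2) by auto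
  have fin: "finite {xs. set xs \<subseteq> (UNIV::'a set) \<and> length xs = n}"
    by (rule finite_lists_length_eq) simp
  show "card A \<le> CARD('a) ^ n"
    using card_inj_on_le[OF assms(1) sub fin] card_lists_length_eq[of "UNIV::'a set" n] by simp
  show "finite A" using inj_on_finite[OF assms(1) sub fin] .
qed

lemma polar_zero: "polar (\<lambda>h. QA2 c m (g * h)) 0 y = 0"
  unfolding polar_def by (simp add: QA2_def)

lemma rad_diff:
  fixes g :: "'a::field poly"
  assumes g: "g \<in> monics k"
    and x: "x \<in> {x \<in> Vsp n. \<forall>y\<in>Vsp n. polar (\<lambda>h. QA2 c m (g * h)) x y = 0}"
    and z: "z \<in> {x \<in> Vsp n. \<forall>y\<in>Vsp n. polar (\<lambda>h. QA2 c m (g * h)) x y = 0}"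
  shows "x - z \<in> {x \<in> Vsp n. \<forall>y\<in>Vsp n. polar (\<lambda>h. QA2 c m (g * h)) x y = 0}"
proof -
  have zV: "smult (-1) z \<in> Vsp n" using z degree_smult_le[of "-1" z] unfolding Vsp_def by auto
  have xz: "x - z = x + smult (-1) z" by simp
  have "x - z \<in> Vsp n" using x z degree_diff_le[of x n z] unfolding Vsp_def by auto
  moreover have "\<forall>y\<in>Vsp n. polar (\<lambda>h. QA2 c m (g * h)) (x - z) y = 0"
  proof
    fix y :: "'a poly" assume y: "y \<in> Vsp n"
    show "polar (\<lambda>h. QA2 c m (g * h)) (x - z) y = 0"
      unfolding xz using polar_add[OF g _ zV y, of x] polar_smult[OF g _ y, where x=z and u="-1"] x z y by simp
  qed
  ultimately show ?thesis by simp
qed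

lemma radzero:
  fixes g :: "'a::field poly"
  assumes g: "g \<in> monics k"
    and x: "x \<in> {x \<in> Vsp n. \<forall>y\<in>Vsp n. polar (\<lambda>h. QA2 c m (g * h)) x y = 0}"
    and d: "degree x + k + m \<le> n" and cm: "c m \<noteq> 0" and two: "(2::'a) \<noteq> 0"
  shows "x = 0"
proof (rule ccontr)
  assume "x \<noteq> 0"
  from key[where c=c and m=m, OF g this d cm two] x show False by blast
qed

lemma part1:
  fixes g :: "'a::field poly"
  assumes g: "g \<in> monics k" and cm: "c m \<noteq> 0" and two: "(2::'a) \<noteq> 0"
  shows "polar_rank (\<lambda>h. QA2 c m (g * h)) (Vsp N) \<ge> nat (max 0 (int N - int k - int m + 1))"
proof (cases "N + 1 \<le> k + m")
  case True then show ?thesis by simp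
next
  case False
  define K where "K = k + m"
  define r where "r = N + 1 - K"
  have r1: "r \<ge> 1" and NKr: "N + 1 = K + r" using False unfolding r_def K_def by auto
  interpret vs: vector_space "smult :: 'a \<Rightarrow> 'a poly \<Rightarrow> 'a poly"
    by unfold_locales (simp_all add: smult_add_right smult_add_left)
  interpret ph: module_hom "smult :: 'a \<Rightarrow> 'a poly \<Rightarrow> 'a poly" smult "poly_shift r"
    by unfold_locales (auto simp: poly_eq_iff coeff_poly_shift smult_add_right smult_add_left)
  let ?Q = "\<lambda>h. QA2 c m (g * h)"
  define R where "R = {x \<in> Vsp N. \<forall>y\<in>Vsp N. polar ?Q x y = 0}"
  have spanK: "p \<in> vs.span ((\<lambda>i. monom (1::'a) i) ` {..<K'})"
    if cp: "\<And>i. i \<ge> K' \<Longrightarrow> coeff p i = 0" for p :: "'a poly" and K'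
  proof -
    have "p = (\<Sum>i<K'. smult (coeff p i) (monom 1 i))"
    proof (rule poly_eqI)
      fix l
      have "coeff (\<Sum>i<K'. smult (coeff p i) (monom 1 i)) l = (\<Sum>i<K'. if i = l then coeff p i else 0)"
        unfolding coeff_sum by (rule sum.cong) auto
      also have "\<dots> = coeff p l" using cp by (auto simp: sum.delta')
      finally show "coeff p l = coeff (\<Sum>i<K'. smult (coeff p i) (monom 1 i)) l" by simp
    qed
    also have "\<dots> \<in> vs.span ((\<lambda>i. monom (1::'a) i) ` {..<K'})"
      by (rule vs.span_sum, rule vs.span_scale, rule vs.span_base) auto
    finally show ?thesis .
  qed
  define I where "I = (\<lambda>i. monom (1::'a) i) ` {..<N+1}"
  have IV: "I \<subseteq> Vsp N" unfolding I_def Vsp_def by (auto intro: le_trans[OF degree_monom_le])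
  have VI: "Vsp N \<subseteq> vs.span I"
  proof
    fix p :: "'a poly" assume "p \<in> Vsp N"
    then have "\<And>i. i \<ge> N + 1 \<Longrightarrow> coeff p i = 0" unfolding Vsp_def by (auto intro: coeff_eq_0)
    then show "p \<in> vs.span I" unfolding I_def by (rule spanK)
  qed
  have cI: "card I = N + 1"
    unfolding I_def by (subst card_image) (auto simp: inj_on_def monom_eq_iff')
  have indI: "vs.independent I"
    unfolding vs.dependent_explicit
  proof clarify
    fix t u v
    assume t: "finite t" "t \<subseteq> I" "(\<Sum>v\<in>t. smult (u v) v) = 0" "v \<in> t" "u v \<noteq> 0"
    obtain i where vi: "v = monom 1 i" using t I_def by auto
    have "coeff (\<Sum>v\<in>t. smult (u v) v) i = (\<Sum>w\<in>t. if w = v then u w else 0)"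
      unfolding coeff_sum
    proof (rule sum.cong[OF refl])
      fix w assume "w \<in> t"
      then obtain j where wj: "w = monom 1 j" using t I_def by auto
      show "coeff (smult (u w) w) i = (if w = v then u w else 0)"
        using wj vi by (auto simp: monom_eq_iff')
    qed
    also have "\<dots> = u v" using t by (simp add: sum.delta')
    finally show False using t by simp
  qed
  have dimV: "vs.dim (Vsp N) \<ge> N + 1"
    using vs.basis_card_eq_dim[OF IV VI indI] cI by simp
  have subR: "vs.subspace R"
    unfolding vs.subspace_def R_def
  proof (intro conjI ballI allI)
    show "0 \<in> {x \<in> Vsp N. \<forall>y\<in>Vsp N. polar ?Q x y = 0}"
      by (simp add: Vsp_def polar_zero)
  next
    fix x z assume x: "x \<in> {x \<in> Vsp N. \<forall>y\<in>Vsp N. polar ?Q x y = 0}"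
      and z: "z \<in> {x \<in> Vsp N. \<forall>y\<in>Vsp N. polar ?Q x y = 0}"
    have "x + z \<in> Vsp N" using x z degree_add_le[of x N z] unfolding Vsp_def by auto
    then show "x + z \<in> {x \<in> Vsp N. \<forall>y\<in>Vsp N. polar ?Q x y = 0}"
      using x z polar_add[OF g, of x N z] by auto
  next
    fix u and x assume x: "x \<in> {x \<in> Vsp N. \<forall>y\<in>Vsp N. polar ?Q x y = 0}"
    have "smult u x \<in> Vsp N" using x degree_smult_le[of u x] unfolding Vsp_def by auto
    then show "smult u x \<in> {x \<in> Vsp N. \<forall>y\<in>Vsp N. polar ?Q x y = 0}"
      using x polar_smult[OF g, of x N] by auto
  qed
  obtain B where B: "B \<subseteq> R" "vs.independent B" "R \<subseteq> vs.span B" "card B = vs.dim R"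
    using vs.basis_exists by blast
  have spanB: "vs.span B \<subseteq> R" using vs.span_minimal[OF B(1) subR] .
  have injR: "inj_on (poly_shift r) R"
  proof (rule inj_onI)
    fix x z assume x: "x \<in> R" and z: "z \<in> R" and e: "poly_shift r x = poly_shift r z"
    have d: "x - z \<in> R" using rad_diff[OF g, of x N c m z] x z unfolding R_def by simp
    have "poly_shift r (x - z) = 0" using e by (simp add: ph.diff)
    then have cz: "\<And>i. coeff (x - z) (i + r) = 0" by (metis coeff_0 coeff_poly_shift)
    have "degree (x - z) \<le> r - 1"
    proof (rule degree_le, intro allI impI)
      fix i assume "r - 1 < i"
      then have "i = (i - r) + r" using r1 by simp
      then show "coeff (x - z) i = 0" using cz by metis
    qed
    then have "degree (x - z) + k + m \<le> N" using NKr r1 unfolding K_def by simp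
    then have "x - z = 0" using radzero[where c=c and m=m and n=N, OF g _ _ cm two] d unfolding R_def by blast
    then show "x = z" by simp
  qed
  have injB: "inj_on (poly_shift r) (vs.span B)" using inj_on_subset[OF injR spanB] .
  have indB: "vs.independent (poly_shift r ` B)"
    using ph.dependent_inj_imageD[OF _ injB] B(2) by blast
  have cB: "card (poly_shift r ` B) = card B"
    using card_image inj_on_subset[OF injR B(1)] by blast
  define T where "T = (\<lambda>i. monom (1::'a) i) ` {..<K}"
  have BT: "poly_shift r ` B \<subseteq> vs.span T"
  proof
    fix p assume "p \<in> poly_shift r ` B"
    then obtain x where xB: "x \<in> B" and p: "p = poly_shift r x" by blast
    have xV: "degree x \<le> N" using B(1) xB unfolding R_def Vsp_def by auto
    have cp: "\<And>i. i \<ge> K \<Longrightarrow> coeff p i = 0"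
      using xV NKr unfolding p by (auto simp: coeff_poly_shift intro!: coeff_eq_0)
    then show "p \<in> vs.span T" unfolding T_def by (rule spanK)
  qed
  have "card (poly_shift r ` B) \<le> card T"
    using vs.independent_span_bound[OF _ indB BT] unfolding T_def by simp
  also have "\<dots> \<le> K" unfolding T_def using card_image_le[of "{..<K}"] by simp
  finally have dimR: "vs.dim R \<le> K" using cB B(4) by simp
  have "polar_rank ?Q (Vsp N) = vs.dim (Vsp N) - vs.dim R"
    unfolding polar_rank_def R_def by simp
  then show ?thesis using dimV dimR NKr unfolding K_def by simp
qed


lemma char_pow:
  fixes \<psi> :: "'a::field \<Rightarrow> complex"
  assumes "nontriv_add_char \<psi>"
  shows "\<psi> x ^ n * \<psi> 0 = \<psi> (of_nat n * x)"
proof (induction n)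
  case 0 then show ?case by simp
next
  case (Suc n)
  have "\<psi> (of_nat (Suc n) * x) = \<psi> x * \<psi> (of_nat n * x)"
    using assms unfolding nontriv_add_char_def by (simp add: algebra_simps)
  then show ?case using Suc by simp
qed

lemma char_props:
  fixes \<psi> :: "'a::{finite,field} \<Rightarrow> complex"
  assumes ch: "nontriv_add_char \<psi>" and p0: "\<psi> 0 \<noteq> 0"
  shows "\<psi> 0 = 1" "norm (\<psi> x) = 1" "cnj (\<psi> x) = \<psi> (-x)"
proof -
  have mul: "\<And>a b. \<psi> (a + b) = \<psi> a * \<psi> b" using ch unfolding nontriv_add_char_def by blast
  have "\<psi> 0 = \<psi> 0 * \<psi> 0" using mul[of 0 0] by simp
  then show one: "\<psi> 0 = 1" using p0 by simp
  have cp: "CHAR('a) > 0" by (rule finite_imp_CHAR_pos) simp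
  have "\<psi> x ^ CHAR('a) = 1" using char_pow[OF ch, of x "CHAR('a)"] one by simp
  then have "norm (\<psi> x) ^ CHAR('a) = 1 ^ CHAR('a)" by (metis norm_one norm_power power_one)
  then show n1: "norm (\<psi> x) = 1" using power_eq_imp_eq_base cp by (metis norm_ge_zero zero_le_one)
  have inv: "\<psi> x * \<psi> (-x) = 1" using mul[of x "-x"] one by simp
  have "\<psi> x * cnj (\<psi> x) = 1" using complex_norm_square[of "\<psi> x"] n1 by simp
  then show "cnj (\<psi> x) = \<psi> (-x)" using inv
    by (metis mult.left_commute mult.right_neutral mult.commute)
qed

lemma monic_add:
  fixes h z :: "'a::field poly"
  assumes h: "h \<in> monics N" and z: "z \<in> Vsp (N - 1)" and N: "N \<ge> 1"
  shows "h + z \<in> monics N"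
proof -
  have dh: "degree h = N" "coeff h N = 1" using h unfolding monics_def by auto
  have cz: "\<And>i. i \<ge> N \<Longrightarrow> coeff z i = 0" using z N unfolding Vsp_def by (auto intro: coeff_eq_0)
  have c1: "coeff (h + z) N = 1" using dh cz by simp
  have "degree (h + z) \<le> N"
    by (rule degree_le) (use dh cz in \<open>auto simp: coeff_eq_0\<close>)
  moreover have "N \<le> degree (h + z)" using c1 by (intro le_degree) simp
  ultimately show ?thesis using c1 unfolding monics_def by simp
qed

lemma monic_diff:
  fixes h1 h2 :: "'a::field poly"
  assumes h1: "h1 \<in> monics N" and h2: "h2 \<in> monics N" and N: "N \<ge> 1"
  shows "h1 - h2 \<in> Vsp (N - 1)"
proof -
  have d: "degree h1 = N" "coeff h1 N = 1" "degree h2 = N" "coeff h2 N = 1"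
    using h1 h2 unfolding monics_def by auto
  have "degree (h1 - h2) \<le> N - 1"
  proof (rule degree_le, intro allI impI)
    fix i assume "N - 1 < i"
    then have "i = N \<or> i > N" using N by auto
    then show "coeff (h1 - h2) i = 0" using d by (auto simp: coeff_eq_0)
  qed
  then show ?thesis unfolding Vsp_def by simp
qed

lemma monics_card:
  assumes "N \<ge> 1"
  shows "card (monics N :: 'a::{finite,field} poly set) \<le> CARD('a) ^ N" "finite (monics N :: 'a poly set)"
proof -
  have inj: "inj_on (\<lambda>h::'a poly. map (coeff h) [0..<N]) (monics N)"
  proof (rule inj_onI)
    fix x y :: "'a poly" assume x: "x \<in> monics N" and y: "y \<in> monics N"
      and e: "map (coeff x) [0..<N] = map (coeff y) [0..<N]"
    have d: "degree x = N" "coeff x N = 1" "degree y = N" "coeff y N = 1"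
      using x y unfolding monics_def by auto
    show "x = y"
    proof (rule poly_eqI)
      fix i
      show "coeff x i = coeff y i"
      proof (cases "i < N")
        case True then show ?thesis using e by (simp add: map_eq_conv)
      next
        case False then have "i = N \<or> i > N" by auto
        then show ?thesis using d by (auto simp: coeff_eq_0)
      qed
    qed
  qed
  show "card (monics N :: 'a poly set) \<le> CARD('a) ^ N" "finite (monics N :: 'a poly set)"
    using card_le_lists[OF inj] by auto
qed

lemma Vsp_card:
  assumes N: "N \<ge> 1"
  shows "card (Vsp (N - 1) :: 'a::{finite,field} poly set) \<le> CARD('a) ^ N \<and> finite (Vsp (N - 1) :: 'a poly set)"
proof -
  have inj: "inj_on (\<lambda>h::'a poly. map (coeff h) [0..<N]) (Vsp (N - 1))"
  proof (rule inj_onI)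
    fix x y :: "'a poly" assume x: "x \<in> Vsp (N - 1)" and y: "y \<in> Vsp (N - 1)"
      and e: "map (coeff x) [0..<N] = map (coeff y) [0..<N]"
    show "x = y"
    proof (rule poly_eqI)
      fix i
      show "coeff x i = coeff y i"
      proof (cases "i < N")
        case True then show ?thesis using e by (simp add: map_eq_conv)
      next
        case f: False then show ?thesis using x y N unfolding Vsp_def by (auto simp: coeff_eq_0)
      qed
    qed
  qed
  show ?thesis using card_le_lists[OF inj] by auto
qed


lemma rad_card:
  fixes g :: "'a::{finite,field} poly"
  assumes g: "g \<in> monics k" and cm: "c m \<noteq> 0" and two: "(2::'a) \<noteq> 0" and NK: "k + m < N"
  shows "card {x \<in> Vsp (N - 1). \<forall>y\<in>Vsp (N - 1). polar (\<lambda>h. QA2 c m (g * h)) x y = 0} \<le> CARD('a) ^ (k + m)"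
proof -
  define K where "K = k + m"
  define r where "r = N - K"
  have r1: "r \<ge> 1" and Nr: "N = r + K" using NK unfolding r_def K_def by auto
  let ?R = "{x \<in> Vsp (N - 1). \<forall>y\<in>Vsp (N - 1). polar (\<lambda>h. QA2 c m (g * h)) x y = 0}"
  have inj: "inj_on (\<lambda>x::'a poly. map (\<lambda>i. coeff x (r + i)) [0..<K]) ?R"
  proof (rule inj_onI)
    fix x z :: "'a poly" assume x: "x \<in> ?R" and z: "z \<in> ?R"
      and e: "map (\<lambda>i. coeff x (r + i)) [0..<K] = map (\<lambda>i. coeff z (r + i)) [0..<K]"
    have d: "x - z \<in> ?R" using rad_diff[OF g x z] .
    have e2: "\<And>i. i < K \<Longrightarrow> coeff x (r + i) = coeff z (r + i)" using e by (simp add: map_eq_conv)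
    have dxz: "degree (x - z) \<le> N - 1" using d unfolding Vsp_def by simp
    have "degree (x - z) \<le> r - 1"
    proof (rule degree_le, intro allI impI)
      fix i assume i: "r - 1 < i"
      show "coeff (x - z) i = 0"
      proof (cases "i < N")
        case True
        then have "i = r + (i - r)" "i - r < K" using i r1 Nr by auto
        then show ?thesis using e2[of "i - r"] by (metis coeff_diff diff_self)
      next
        case False
        then have "degree (x - z) < i" using dxz r1 Nr by simp
        then show ?thesis by (rule coeff_eq_0)
      qed
    qed
    then have "degree (x - z) + k + m \<le> N - 1" using Nr r1 unfolding K_def by simp
    then have "x - z = 0" using radzero[where c=c and m=m and n="N-1", OF g _ _ cm two] d by blast
    then show "x = z" by simp
  qed
  show ?thesis using card_le_lists(1)[OF inj] unfolding K_def by simp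
qed

lemma part2:
  fixes g :: "'a::{finite,field} poly" and \<psi> :: "'a \<Rightarrow> complex"
  assumes g: "g \<in> monics k" and cm: "c m \<noteq> 0" and two: "(2::'a) \<noteq> 0"
    and ch: "nontriv_add_char \<psi>"
  shows "norm (\<Sum>h\<in>monics N. \<psi> (QA c m L (k + N) (g * h)))
      \<le> 1 * real CARD('a) powr (real N - real_of_int (max 0 (int N - int k - int m)) / 2)"
proof (cases "\<psi> 0 = 0")
  case True
  have "\<psi> x = 0" for x
    using ch True unfolding nontriv_add_char_def by (metis add.right_neutral mult_zero_right)
  then show ?thesis by simp
next
  case False
  note cp = char_props[OF ch False]
  have mul: "\<And>a b. \<psi> (a + b) = \<psi> a * \<psi> b" using ch unfolding nontriv_add_char_def by blast
  define q where "q = real CARD('a)"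
  have q0: "q > 0" unfolding q_def by simp
  define F where "F h = QA c m L (k + N) (g * h)" for h
  define S where "S = (\<Sum>h\<in>monics N. \<psi> (F h))"
  show ?thesis
  proof (cases "N \<le> k + m")
    case True
    have "norm S \<le> (\<Sum>h\<in>monics N. norm (\<psi> (F h)))" unfolding S_def by (rule norm_sum)
    also have "\<dots> = real (card (monics N :: 'a poly set))" using cp(2) by simp
    also have "\<dots> \<le> q ^ N"
    proof (cases "N = 0")
      case True
      have "card (monics N :: 'a poly set) \<le> 1"
      proof -
        have "monics N \<subseteq> {1 :: 'a poly}" using True unfolding monics_def
          by (auto elim!: degree_eq_zeroE)
        then show ?thesis using card_mono[of "{1::'a poly}"] by fastforce
      qed
      then show ?thesis using True by simp
    next
      case False
      then show ?thesis using monics_card[of N, where 'a='a] unfolding q_def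
        by (metis One_nat_def Suc_leI neq0_conv of_nat_le_iff of_nat_power)
    qed
    also have "\<dots> = q powr (real N - real_of_int (max 0 (int N - int k - int m)) / 2)"
      using True q0 by (simp add: powr_realpow)
    finally show ?thesis unfolding S_def F_def q_def by simp
  next
    case NK: False
    define K where "K = k + m"
    have N1: "N \<ge> 1" using NK by simp
    let ?M = "monics N :: 'a poly set"
    let ?W = "Vsp (N - 1) :: 'a poly set"
    let ?Q = "\<lambda>h. QA2 c m (g * h)"
    let ?P = "polar ?Q"
    define Rd where "Rd = {x \<in> ?W. \<forall>y\<in>?W. ?P x y = 0}"
    define E where "E z = QA2 c m (g * z) + linform L (k + N) (g * z)" for z
    define T where "T z = (\<Sum>h\<in>?M. \<psi> (?P h z))" for z
    have finM: "finite ?M" and cM: "card ?M \<le> CARD('a) ^ N" using monics_card[OF N1] by auto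
    have finW: "finite ?W" using Vsp_card[OF N1] by auto
    have cR: "card Rd \<le> CARD('a) ^ K" unfolding Rd_def K_def using rad_card[where c=c and m=m, OF g cm two] NK by simp
    have WV: "?W \<subseteq> Vsp N" unfolding Vsp_def by auto
    have MV: "?M \<subseteq> Vsp N" unfolding Vsp_def monics_def by auto
    have lin: "linform L n (a + b) = linform L n a + linform L n b" for n a b
      unfolding linform_def by (simp add: algebra_simps sum.distrib)
    have FA: "F (h + z) - F h = ?P h z + E z" for h z
      unfolding F_def QA_def E_def polar_def by (simp add: distrib_left lin)
    have Tz: "T z = 0" if z: "z \<in> ?W" "z \<notin> Rd" for z
    proof -
      obtain w where w: "w \<in> ?W" "?P z w \<noteq> 0" using z unfolding Rd_def by blast
      have pw: "?P w z \<noteq> 0" using w polar_sym by metis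
      obtain e where e: "\<psi> e \<noteq> 1" using ch unfolding nontriv_add_char_def by blast
      define w1 where "w1 = smult (e / ?P w z) w"
      have w1W: "w1 \<in> ?W" using w degree_smult_le[of "e / ?P w z" w] unfolding w1_def Vsp_def by auto
      have mw1W: "- w1 \<in> ?W" using w1W unfolding Vsp_def by simp
      have pw1: "?P w1 z = e" unfolding w1_def
        using polar_smult[OF g, where x=w and n=N and y=z and u="e / ?P w z" and c=c and m=m] w z WV pw by auto
      have "T z = (\<Sum>h\<in>?M. \<psi> (?P (h + w1) z))" unfolding T_def
      proof (rule sum.reindex_bij_witness[where i="\<lambda>h. h + w1" and j="\<lambda>h. h - w1"])
        fix a assume a: "a \<in> ?M"
        show "a - w1 + w1 = a" by simp
        show "a - w1 \<in> ?M" using monic_add[OF a mw1W N1] by simp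
        show "a + w1 - w1 = a" by simp
        show "a + w1 \<in> ?M" using monic_add[OF a w1W N1] .
        show "\<psi> (?P (a - w1 + w1) z) = \<psi> (?P a z)" by simp
      qed
      also have "\<dots> = (\<Sum>h\<in>?M. \<psi> e * \<psi> (?P h z))"
      proof (rule sum.cong[OF refl])
        fix h assume h: "h \<in> ?M"
        have "?P (h + w1) z = ?P h z + ?P w1 z"
          by (rule polar_add[OF g, where n=N]) (use h w1W z MV WV in auto)
        then show "\<psi> (?P (h + w1) z) = \<psi> e * \<psi> (?P h z)" using pw1 mul by (simp add: mult.commute)
      qed
      also have "\<dots> = \<psi> e * T z" unfolding T_def by (simp add: sum_distrib_left)
      finally have "(1 - \<psi> e) * T z = 0" by (simp add: algebra_simps)
      then show ?thesis using e by simp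
    qed
    have SS: "S * cnj S = (\<Sum>z\<in>?W. \<psi> (E z) * T z)"
    proof -
      have "S * cnj S = (\<Sum>h1\<in>?M. \<Sum>h2\<in>?M. \<psi> (F h1) * \<psi> (- F h2))"
        unfolding S_def cnj_sum cp(3) by (rule sum_product)
      also have "\<dots> = (\<Sum>h2\<in>?M. \<Sum>h1\<in>?M. \<psi> (F h1 - F h2))"
        by (subst sum.swap) (simp add: mul[symmetric])
      also have "\<dots> = (\<Sum>h2\<in>?M. \<Sum>z\<in>?W. \<psi> (?P h2 z) * \<psi> (E z))"
      proof (rule sum.cong[OF refl])
        fix h2 assume h2: "h2 \<in> ?M"
        have "(\<Sum>h1\<in>?M. \<psi> (F h1 - F h2)) = (\<Sum>z\<in>?W. \<psi> (F (h2 + z) - F h2))"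
        proof (rule sum.reindex_bij_witness[where i="\<lambda>z. h2 + z" and j="\<lambda>h. h - h2"])
          fix a assume a: "a \<in> ?M"
          show "h2 + (a - h2) = a" by simp
          show "a - h2 \<in> ?W" using monic_diff[OF a h2 N1] .
          show "\<psi> (F (h2 + (a - h2)) - F h2) = \<psi> (F a - F h2)" by simp
        next
          fix b assume b: "b \<in> ?W"
          show "h2 + b - h2 = b" by simp
          show "h2 + b \<in> ?M" using monic_add[OF h2 b N1] .
        qed
        also have "\<dots> = (\<Sum>z\<in>?W. \<psi> (?P h2 z) * \<psi> (E z))"
          by (simp add: FA mul)
        finally show "(\<Sum>h1\<in>?M. \<psi> (F h1 - F h2)) = (\<Sum>z\<in>?W. \<psi> (?P h2 z) * \<psi> (E z))" .
      qed
      also have "\<dots> = (\<Sum>z\<in>?W. \<Sum>h2\<in>?M. \<psi> (?P h2 z) * \<psi> (E z))" by (rule sum.swap)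
      also have "\<dots> = (\<Sum>z\<in>?W. \<psi> (E z) * T z)"
        unfolding T_def by (simp add: sum_distrib_left sum_distrib_right mult.commute)
      finally show ?thesis .
    qed
    have "norm S ^ 2 = norm (S * cnj S)"
      using complex_norm_square[of S] by (metis norm_of_real abs_of_nonneg zero_le_power2 norm_ge_zero)
    also have "\<dots> \<le> (\<Sum>z\<in>?W. norm (\<psi> (E z) * T z))" unfolding SS by (rule norm_sum)
    also have "\<dots> \<le> (\<Sum>z\<in>?W. if z \<in> Rd then real (card ?M) else 0)"
    proof (rule sum_mono)
      fix z assume z: "z \<in> ?W"
      show "norm (\<psi> (E z) * T z) \<le> (if z \<in> Rd then real (card ?M) else 0)"
      proof (cases "z \<in> Rd")
        case True
        have "norm (T z) \<le> (\<Sum>h\<in>?M. norm (\<psi> (?P h z)))" unfolding T_def by (rule norm_sum)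
        also have "\<dots> = real (card ?M)" using cp(2) by simp
        finally show ?thesis using True cp(2) by (simp add: norm_mult)
      next
        case False then show ?thesis using Tz z by simp
      qed
    qed
    also have "\<dots> = real (card Rd) * real (card ?M)"
    proof -
      have "Rd \<subseteq> ?W" unfolding Rd_def by auto
      then have "{z \<in> ?W. z \<in> Rd} = Rd" by auto
      then show ?thesis using sum.inter_filter[OF finW, of "\<lambda>_. real (card ?M)" "\<lambda>z. z \<in> Rd"] by simp
    qed
    also have "\<dots> \<le> q ^ K * q ^ N"
    proof -
      have a: "real (card Rd) \<le> q ^ K" using cR unfolding q_def by (metis of_nat_le_iff of_nat_power)
      have b: "real (card ?M) \<le> q ^ N" using cM unfolding q_def by (metis of_nat_le_iff of_nat_power)
      show ?thesis using a b q0 by (intro mult_mono) simp_all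
    qed
    also have "\<dots> = (q powr ((real N + real K) / 2)) ^ 2"
    proof -
      have "(q powr ((real N + real K) / 2)) ^ 2 = q powr ((real N + real K) / 2 + (real N + real K) / 2)"
        by (simp only: power2_eq_square powr_add[symmetric])
      also have "\<dots> = q powr (real (N + K))" by simp
      also have "\<dots> = q ^ (N + K)" using q0 by (rule powr_realpow)
      finally show ?thesis by (simp add: power_add mult.commute)
    qed
    finally have "norm S \<le> q powr ((real N + real K) / 2)"
      by (rule power2_le_imp_le) simp
    also have "(real N + real K) / 2 = real N - real_of_int (max 0 (int N - int k - int m)) / 2"
      using NK unfolding K_def by (simp add: field_simps)
    finally show ?thesis unfolding S_def F_def q_def by simp
  qed
qed

theorem lemma7p1:
  fixes c :: "nat \<Rightarrow> 'a::{finite,field}" and m :: nat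
  assumes q_odd: "odd CARD('a)"
    and cm: "c m \<noteq> 0"
  shows "(\<forall>k N (g::'a poly). g \<in> monics k \<longrightarrow>
            polar_rank (\<lambda>h. QA2 c m (g * h)) (Vsp N) \<ge> nat (max 0 (int N - int k - int m + 1)))
       \<and> (\<exists>C::real. \<forall>k N (g::'a poly) (L::nat \<Rightarrow> 'a) (\<psi>::'a \<Rightarrow> complex).
            g \<in> monics k \<longrightarrow> nontriv_add_char \<psi> \<longrightarrow>
            norm (\<Sum>h\<in>monics N. \<psi> (QA c m L (k + N) (g * h)))
              \<le> C * real CARD('a) powr (real N - real_of_int (max 0 (int N - int k - int m)) / 2))"
proof -
  have two: "(2::'a) \<noteq> 0" using two_ne_0[OF q_odd] .
  show ?thesis
    using part1[where c=c and m=m, OF _ cm two] part2[where c=c and m=m, OF _ cm two] by blast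
qed

end
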